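(* For all integers $m<0$ and $n\geq 1$, \[ N(\leq m+1,n)-M(\leq m,n)=q(-m-1,n)-p(m+2,n). \]
   Context: For a partition $\lambda$, $\operatorname{rank}(\lambda)$ is its largest part minus its number of parts. $\operatorname{crank}(\lambda)$ is the largest part of $\lambda$ if $\lambda$ contains no part equal to $1$; otherwise it is the number of parts larger than the number of ones minus the number of ones. For $n\geq1$, $N(m,n)$ is the number of partitions of $n$ with rank $m$. For $n>1$, $M(m,n)$ is the number of partitions of $n$ with crank $m$. For $n=1$ one sets $M(0,1)=-1$, $M(\pm1,1)=1$ and $M(m,1)=0$ otherwise. The cumulative functions are $N(\leq m,n)=\sum_{r\leq m}N(r,n)$ and $M(\leq m,n)=\sum_{r\leq m}M(r,n)$. Define $p(m,n)=\sum_{r\geq m}N(r,n)$, the number of partitions of $n$ with rank at least $m$. For a partition $\lambda=(\lambda_1\geq\cdots\geq\lambda_\ell)$, its rank-set is the infinite sequence $[-\lambda_1,1-\lambda_2,\ldots,j-\lambda_{j+1},\ldots,\ell-1-\lambda_\ell,\ell,\ell+1,\ldots]$. Then $q(m,n)$ is the number of partitions of $n$ whose rank-set contains $m$. *)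

theory Defs
  imports Main
begin

definition partitions :: "nat \<Rightarrow> nat list set" where
  "partitions n = {xs. sorted_wrt (\<ge>) xs \<and> (\<forall>x\<in>set xs. 0 < x) \<and> sum_list xs = n}"

definition prank :: "nat list \<Rightarrow> int" where
  "prank xs = int (Max (set xs)) - int (length xs)"

definition pcrank :: "nat list \<Rightarrow> int" where
  "pcrank xs = (if 1 \<notin> set xs then int (Max (set xs))
     else int (length (filter (\<lambda>x. x > count_list xs 1) xs)) - int (count_list xs 1))"

definition N :: "int \<Rightarrow> nat \<Rightarrow> int" where
  "N m n = int (card {xs \<in> partitions n. prank xs = m})"

definition M :: "int \<Rightarrow> nat \<Rightarrow> int" where
  "M m n = (if n = 1 then (if m = 0 then -1 else if m = 1 \<or> m = -1 then 1 else 0)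
            else int (card {xs \<in> partitions n. pcrank xs = m}))"

text \<open>Cumulative functions: sums over all r \<le> m (only finitely many nonzero terms).\<close>
definition N_le :: "int \<Rightarrow> nat \<Rightarrow> int" where
  "N_le m n = (\<Sum>r\<in>{r. r \<le> m \<and> N r n \<noteq> 0}. N r n)"

definition M_le :: "int \<Rightarrow> nat \<Rightarrow> int" where
  "M_le m n = (\<Sum>r\<in>{r. r \<le> m \<and> M r n \<noteq> 0}. M r n)"

definition p :: "int \<Rightarrow> nat \<Rightarrow> int" where
  "p m n = int (card {xs \<in> partitions n. m \<le> prank xs})"

text \<open>Rank-set [-l_1, 1-l_2, ..., (len-1)-l_len, len, len+1, ...]; entry j (0-based) is j - xs!j.\<close>
definition rank_set :: "nat list \<Rightarrow> int set" where
  "rank_set xs = {int j - int (xs ! j) | j. j < length xs} \<union> {k. int (length xs) \<le> k}"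

definition q :: "int \<Rightarrow> nat \<Rightarrow> int" where
  "q m n = int (card {xs \<in> partitions n. m \<in> rank_set xs})"

end

theory Submission
  imports Defs
begin


fun pcnt :: "nat \<Rightarrow> nat list \<Rightarrow> nat" where
  "pcnt c [] = 0"
| "pcnt c (x#xs) = (if c < x then Suc (pcnt (Suc c) xs) else 0)"

fun phit :: "nat \<Rightarrow> nat list \<Rightarrow> bool" where
  "phit c [] = False"
| "phit c (x#xs) = (if c < x then phit (Suc c) xs else x = c)"

fun pins :: "nat \<Rightarrow> nat list \<Rightarrow> nat list" where
  "pins c [] = [c]"
| "pins c (x#xs) = (if c < x then x # pins (Suc c) xs else c # x # xs)"

fun pdel :: "nat \<Rightarrow> nat list \<Rightarrow> nat list" where
  "pdel c [] = []"
| "pdel c (x#xs) = (if c < x then x # pdel (Suc c) xs else xs)"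

abbreviation sd :: "nat list \<Rightarrow> bool" where "sd xs \<equiv> sorted_wrt (\<ge>) xs"

lemma pcnt_pins: "pcnt c (pins c ys) = pcnt c ys"
  by (induction ys arbitrary: c) auto

lemma phit_pins: "phit c (pins c ys)"
  by (induction ys arbitrary: c) auto

lemma pdel_pins: "pdel c (pins c ys) = ys"
  by (induction ys arbitrary: c) auto

lemma sum_pins: "sum_list (pins c ys) = sum_list ys + c + pcnt c ys"
  by (induction ys arbitrary: c) auto

lemma set_pins: "set (pins c ys) = insert (c + pcnt c ys) (set ys)"
  by (induction ys arbitrary: c) auto

lemma pins_bound: "\<forall>y\<in>set ys. y \<le> z \<Longrightarrow> c \<le> z \<Longrightarrow> \<forall>e\<in>set (pins c ys). e \<le> z"
proof (induction ys arbitrary: c)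
  case Nil then show ?case by simp
next
  case (Cons y ys)
  show ?case
  proof (cases "c < y")
    case True
    then have "Suc c \<le> z" using Cons.prems by auto
    then have "\<forall>e\<in>set (pins (Suc c) ys). e \<le> z"
      by (intro Cons.IH) (use Cons.prems in auto)
    then show ?thesis using True Cons.prems by simp
  next
    case False then show ?thesis using Cons.prems by auto
  qed
qed

lemma sd_pins: "sd ys \<Longrightarrow> sd (pins c ys)"
proof (induction ys arbitrary: c)
  case Nil then show ?case by simp
next
  case (Cons y ys)
  show ?case
  proof (cases "c < y")
    case True
    have "\<forall>e\<in>set (pins (Suc c) ys). e \<le> y"
      by (rule pins_bound) (use Cons.prems True in auto)
    then show ?thesis using Cons.IH[of "Suc c"] Cons.prems True by auto
  next
    case False then show ?thesis using Cons.prems by auto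
  qed
qed

lemma pcnt_take: "pcnt c (take m xs) = min m (pcnt c xs)"
  by (induction xs arbitrary: c m) (auto simp: take_Cons split: nat.splits)

lemma pins_pdel: "phit c xs \<Longrightarrow> sd xs \<Longrightarrow> pins c (pdel c xs) = xs"
proof (induction xs arbitrary: c)
  case Nil then show ?case by simp
next
  case (Cons x xs)
  show ?case
  proof (cases "c < x")
    case True then show ?thesis using Cons.IH[of "Suc c"] Cons.prems by auto
  next
    case False
    then have "x = c" using Cons.prems by auto
    then show ?thesis using Cons.prems by (cases xs) auto
  qed
qed

lemma sum_pdel: "phit c xs \<Longrightarrow> sum_list (pdel c xs) + c + pcnt c xs = sum_list xs"
proof (induction xs arbitrary: c)
  case Nil then show ?case by simp
next
  case (Cons x xs)
  show ?case
  proof (cases "c < x")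
    case True
    then have "sum_list (pdel (Suc c) xs) + Suc c + pcnt (Suc c) xs = sum_list xs"
      using Cons.IH[of "Suc c"] Cons.prems by simp
    then show ?thesis using True by simp
  next
    case False then show ?thesis using Cons.prems by auto
  qed
qed

lemma set_pdel: "set (pdel c xs) \<subseteq> set xs"
  by (induction xs arbitrary: c) auto

lemma sd_pdel: "sd xs \<Longrightarrow> sd (pdel c xs)"
  by (induction xs arbitrary: c) (auto dest: set_pdel[THEN subsetD])

lemma pcnt_pdel_app:
  "phit c xs \<Longrightarrow> sd xs \<Longrightarrow> \<forall>y\<in>set ys. y \<le> c \<Longrightarrow> pcnt c (pdel c xs @ ys) = pcnt c xs"
proof (induction xs arbitrary: c)
  case Nil then show ?case by simp
next
  case (Cons x xs)
  show ?case
  proof (cases "c < x")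
    case True
    have "\<forall>y\<in>set ys. y \<le> Suc c" using Cons.prems by auto
    then have "pcnt (Suc c) (pdel (Suc c) xs @ ys) = pcnt (Suc c) xs"
      using Cons.IH[of "Suc c"] Cons.prems True by auto
    then show ?thesis using True by simp
  next
    case False
    then have "x = c" using Cons.prems by auto
    have "\<forall>y\<in>set (xs @ ys). y \<le> c" using Cons.prems \<open>x = c\<close> by auto
    then have "pcnt c (xs @ ys) = 0" by (cases "xs @ ys") auto
    then show ?thesis using False by simp
  qed
qed

lemma pdel_filter:
  "phit c xs \<Longrightarrow> sd xs \<Longrightarrow> c + pcnt c xs \<le> w \<Longrightarrow> length (filter (\<lambda>x. w < x) (pdel c xs)) \<le> pcnt c xs"
proof (induction xs arbitrary: c)
  case Nil then show ?case by simp
next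
  case (Cons x xs)
  show ?case
  proof (cases "c < x")
    case True
    have "length (filter (\<lambda>x. w < x) (pdel (Suc c) xs)) \<le> pcnt (Suc c) xs"
      by (rule Cons.IH) (use Cons.prems True in auto)
    then show ?thesis using True by auto
  next
    case False
    then have "x = c" using Cons.prems by auto
    then have "filter (\<lambda>x. w < x) xs = []" using Cons.prems by (auto simp: filter_empty_conv)
    then show ?thesis using False by simp
  qed
qed

lemma pcnt_crank: "sd xs \<Longrightarrow> pcnt c xs + c \<le> w \<or> w < length (filter (\<lambda>x. w < x) xs) + c"
proof (induction xs arbitrary: c)
  case Nil then show ?case using le_less_linear[of c w] by simp
next
  case (Cons x xs)
  show ?case
  proof (cases "c < x")
    case True
    have IH: "pcnt (Suc c) xs + Suc c \<le> w \<or> w < length (filter (\<lambda>x. w < x) xs) + Suc c"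
      using Cons.IH[of "Suc c"] Cons.prems by auto
    show ?thesis
    proof (cases "w < x")
      case True then show ?thesis using IH \<open>c < x\<close> by auto
    next
      case False
      then have "filter (\<lambda>x. w < x) xs = []" using Cons.prems by (auto simp: filter_empty_conv)
      then show ?thesis using IH \<open>c < x\<close> False by auto
    qed
  next
    case False then show ?thesis using le_less_linear[of c w] by auto
  qed
qed

lemma pcnt_le: "0 < c \<Longrightarrow> pcnt c xs \<le> length (filter (\<lambda>x. 1 < x) xs)"
  by (induction xs arbitrary: c) auto

lemma ones_split: "sd xs \<Longrightarrow> \<forall>x\<in>set xs. 0 < x \<Longrightarrow>
   xs = filter (\<lambda>x. 1 < x) xs @ replicate (count_list xs 1) 1"
proof (induction xs)
  case Nil then show ?case by simp
next
  case (Cons x xs)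
  show ?case
  proof (cases "1 < x")
    case True then show ?thesis using Cons by auto
  next
    case False
    then have "x = 1" using Cons.prems by auto
    then have "\<forall>y\<in>set xs. y = 1" using Cons.prems by fastforce
    then have f: "filter (\<lambda>x. 1 < x) xs = []" and e: "xs = replicate (length xs) 1"
      by (auto simp: filter_empty_conv replicate_length_same)
    have c: "count_list xs 1 = length xs"
      using \<open>\<forall>y\<in>set xs. y = 1\<close> by (induction xs) auto
    have r: "replicate (Suc (length xs)) (1::nat) = x # xs"
      using e \<open>x = 1\<close> by (metis replicate_Suc)
    show ?thesis using \<open>x = 1\<close> f c r by simp
  qed
qed



definition pad :: "nat list \<Rightarrow> nat \<Rightarrow> nat" where
  "pad xs j = (if j < length xs then xs ! j else 0)"

definition pconj :: "nat list \<Rightarrow> nat list" where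
  "pconj xs = map (\<lambda>i. length (filter (\<lambda>x. i < x) xs)) [0..<(if xs = [] then 0 else hd xs)]"

lemma dual_filter: "sd xs \<Longrightarrow> (j < length (filter (\<lambda>x. i < x) xs)) = (i < pad xs j)"
proof (induction xs arbitrary: j)
  case Nil then show ?case by (simp add: pad_def)
next
  case (Cons x xs)
  show ?case
  proof (cases "i < x")
    case True
    then show ?thesis using Cons by (cases j) (auto simp: pad_def)
  next
    case False
    then have "filter (\<lambda>x. i < x) xs = []" using Cons.prems by (auto simp: filter_empty_conv)
    moreover have "pad (x#xs) j \<le> x" using Cons.prems
      by (cases j) (auto simp: pad_def)
    ultimately show ?thesis using False by auto
  qed
qed

lemma hd_max: "sd xs \<Longrightarrow> xs \<noteq> [] \<Longrightarrow> x \<in> set xs \<Longrightarrow> x \<le> hd xs"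
  by (cases xs) auto

lemma pad_conj: "sd xs \<Longrightarrow> pad (pconj xs) i = length (filter (\<lambda>x. i < x) xs)"
proof (cases "xs \<noteq> [] \<and> i < hd xs")
  case True
  then show ?thesis by (simp add: pad_def pconj_def)
next
  case False
  assume "sd xs"
  have "\<not> i < x" if "x \<in> set xs" for x
  proof -
    have "xs \<noteq> []" using that by auto
    then have "x \<le> hd xs" "\<not> i < hd xs" using hd_max[OF \<open>sd xs\<close>] that False by auto
    then show ?thesis by linarith
  qed
  then have "filter (\<lambda>x. i < x) xs = []" by (auto simp: filter_empty_conv)
  then show ?thesis using False by (auto simp: pad_def pconj_def)
qed

lemma dual: "sd xs \<Longrightarrow> (j < pad (pconj xs) i) = (i < pad xs j)"
  using pad_conj dual_filter by simp

lemma sd_conj: "sd (pconj xs)"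
proof -
  have "length (filter (\<lambda>x. b < x) xs) \<le> length (filter (\<lambda>x. a < x) xs)" if "a \<le> b" for a b
  proof -
    have "filter (\<lambda>x. b < x) xs = filter (\<lambda>x. b < x) (filter (\<lambda>x. a < x) xs)"
      using that by (auto simp: filter_filter intro: filter_cong)
    then show ?thesis by (metis length_filter_le)
  qed
  then show ?thesis unfolding pconj_def
    by (auto simp: sorted_wrt_iff_nth_less)
qed

lemma pos_conj: "\<forall>y\<in>set (pconj xs). 0 < y"
proof
  fix y assume "y \<in> set (pconj xs)"
  then obtain i where i: "xs \<noteq> []" "i < hd xs" "y = length (filter (\<lambda>x. i < x) xs)"
    by (auto simp: pconj_def split: if_splits)
  then have "hd xs \<in> set (filter (\<lambda>x. i < x) xs)" by auto
  then show "0 < y" using i by (metis length_pos_if_in_set)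
qed

lemma sum_conj_gen: "sum_list (map (\<lambda>i. length (filter (\<lambda>x. i < x) xs)) [0..<K]) = sum_list (map (min K) xs)"
proof (induction xs)
  case Nil then show ?case by (induction K) auto
next
  case (Cons x xs)
  have "sum_list (map (\<lambda>i. length (filter (\<lambda>y. i < y) (x#xs))) [0..<K])
      = sum_list (map (\<lambda>i. (if i < x then 1 else 0) + length (filter (\<lambda>y. i < y) xs)) [0..<K])"
    by (rule arg_cong[where f=sum_list]) auto
  also have "\<dots> = sum_list (map (\<lambda>i. if i < x then 1 else 0) [0..<K]) + sum_list (map (min K) xs)"
    by (simp add: sum_list_addf Cons.IH)
  also have "sum_list (map (\<lambda>i. if i < x then (1::nat) else 0) [0..<K]) = min K x"
    by (induction K) auto
  finally show ?case by simp
qed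

lemma sum_conj: "sd xs \<Longrightarrow> sum_list (pconj xs) = sum_list xs"
proof (cases xs)
  case Nil then show ?thesis by (simp add: pconj_def)
next
  case (Cons a as)
  assume "sd xs"
  have "map (min (hd xs)) xs = xs"
    using hd_max[OF \<open>sd xs\<close>] Cons by (auto intro: map_idI)
  have ne: "xs \<noteq> []" using Cons by simp
  have "pconj xs = map (\<lambda>i. length (filter (\<lambda>x. i < x) xs)) [0..<hd xs]"
    by (simp only: pconj_def if_not_P[OF ne])
  then have "sum_list (pconj xs) = sum_list (map (min (hd xs)) xs)"
    by (simp only: sum_conj_gen)
  then show ?thesis using \<open>map (min (hd xs)) xs = xs\<close> by simp
qed

lemma pad_eq: "\<forall>x\<in>set xs. 0 < x \<Longrightarrow> \<forall>y\<in>set ys. 0 < y \<Longrightarrow> (\<And>j. pad xs j = pad ys j) \<Longrightarrow> xs = ys"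
proof -
  assume px: "\<forall>x\<in>set xs. 0 < x" and py: "\<forall>y\<in>set ys. 0 < y" and eq: "\<And>j. pad xs j = pad ys j"
  have l: "length xs = length ys"
  proof (rule ccontr)
    assume "length xs \<noteq> length ys"
    then consider "length xs < length ys" | "length ys < length xs" by linarith
    then show False
    proof cases
      case 1
      then have "pad ys (length xs) > 0" using py by (auto simp: pad_def)
      then show False using eq[of "length xs"] by (simp add: pad_def)
    next
      case 2
      then have "pad xs (length ys) > 0" using px by (auto simp: pad_def)
      then show False using eq[of "length ys"] by (simp add: pad_def)
    qed
  qed
  show "xs = ys"
  proof (rule nth_equalityI)
    show "length xs = length ys" by (rule l)
    fix i assume "i < length xs"
    then show "xs ! i = ys ! i" using eq[of i] l by (simp add: pad_def)
  qed
qed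

lemma conj_conj: "sd xs \<Longrightarrow> \<forall>x\<in>set xs. 0 < x \<Longrightarrow> pconj (pconj xs) = xs"
proof (rule pad_eq)
  assume s: "sd xs" and "\<forall>x\<in>set xs. 0 < x"
  then show "\<forall>x\<in>set xs. 0 < x" by simp
  show "\<forall>y\<in>set (pconj (pconj xs)). 0 < y" by (rule pos_conj)
  fix j
  have "t < pad (pconj (pconj xs)) j \<longleftrightarrow> t < pad xs j" for t
    using dual[of "pconj xs" t j] dual[of xs j t] sd_conj s by simp
  then show "pad (pconj (pconj xs)) j = pad xs j"
    by (metis less_irrefl nat_neq_iff)
qed

lemma conj_parts: "xs \<in> partitions n \<Longrightarrow> pconj xs \<in> partitions n"
  unfolding partitions_def using sd_conj pos_conj sum_conj by auto



lemma rs_mem: "x \<in> rank_set ys \<longleftrightarrow> (\<exists>j<length ys. x = int j - int (ys ! j)) \<or> int (length ys) \<le> x"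
  unfolding rank_set_def by auto

lemma rs_iff: "int k \<in> rank_set ys \<longleftrightarrow> (\<exists>i. pad ys i + k = i)"
proof
  assume "int k \<in> rank_set ys"
  then have "(\<exists>j<length ys. int k = int j - int (ys ! j)) \<or> int (length ys) \<le> int k"
    by (simp only: rs_mem)
  then show "\<exists>i. pad ys i + k = i"
  proof
    assume "\<exists>j<length ys. int k = int j - int (ys ! j)"
    then obtain j where j: "j < length ys" "int k = int j - int (ys ! j)" by blast
    then have "ys ! j + k = j" by linarith
    then have "pad ys j + k = j" using j(1) by (simp add: pad_def)
    then show ?thesis by blast
  next
    assume "int (length ys) \<le> int k"
    then have "pad ys k + k = k" by (simp add: pad_def)
    then show ?thesis by blast
  qed
next
  assume "\<exists>i. pad ys i + k = i"
  then obtain i where i: "pad ys i + k = i" by blast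
  show "int k \<in> rank_set ys"
  proof (cases "i < length ys")
    case True
    then have "int k = int i - int (ys ! i)" using i by (simp add: pad_def)
    then show ?thesis using True rs_mem by blast
  next
    case False
    then have "i = k" using i by (simp add: pad_def)
    then show ?thesis using False rs_mem by simp
  qed
qed

lemma pad_Cons_Suc: "pad (x#xs) (Suc j) = pad xs j"
  by (simp add: pad_def)

lemma pad_Cons_0: "pad (x#xs) 0 = x"
  by (simp add: pad_def)

lemma pad_le: "sd (x#xs) \<Longrightarrow> pad xs j \<le> x"
  by (auto simp: pad_def)

lemma phit_iff: "sd xs \<Longrightarrow> 0 < c \<Longrightarrow> phit c xs \<longleftrightarrow> (\<exists>j. pad xs j = j + c)"
proof (induction xs arbitrary: c)
  case Nil then show ?case by (simp add: pad_def)
next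
  case (Cons x xs)
  have ex: "(\<exists>j. pad (x#xs) j = j + c) \<longleftrightarrow> x = c \<or> (\<exists>j. pad xs j = j + Suc c)"
  proof
    assume "\<exists>j. pad (x#xs) j = j + c"
    then obtain j where j: "pad (x#xs) j = j + c" by blast
    show "x = c \<or> (\<exists>j. pad xs j = j + Suc c)"
    proof (cases j)
      case 0 then show ?thesis using j by (simp add: pad_Cons_0)
    next
      case (Suc j') then show ?thesis using j by (auto simp: pad_Cons_Suc)
    qed
  next
    assume "x = c \<or> (\<exists>j. pad xs j = j + Suc c)"
    then show "\<exists>j. pad (x#xs) j = j + c"
    proof
      assume "x = c" then have "pad (x#xs) 0 = 0 + c" by (simp add: pad_Cons_0)
      then show ?thesis by blast
    next
      assume "\<exists>j. pad xs j = j + Suc c"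
      then obtain j where "pad xs j = j + Suc c" by blast
      then have "pad (x#xs) (Suc j) = Suc j + c" by (simp add: pad_Cons_Suc)
      then show ?thesis by blast
    qed
  qed
  show ?case
  proof (cases "c < x")
    case True
    have "phit (Suc c) xs \<longleftrightarrow> (\<exists>j. pad xs j = j + Suc c)"
      using Cons.IH[of "Suc c"] Cons.prems by simp
    then show ?thesis using True ex by auto
  next
    case False
    have "pad xs j \<noteq> j + Suc c" for j using pad_le[OF Cons.prems(1), of j] False by linarith
    then have "\<not> (\<exists>j. pad xs j = j + Suc c)" by blast
    then show ?thesis using False ex by auto
  qed
qed

lemma key: assumes s: "sd xs"
  shows "(\<exists>j. pad xs j = j + Suc k) \<longleftrightarrow> \<not> (\<exists>i. pad (pconj xs) i + k = i)"
proof
  assume "\<exists>j. pad xs j = j + Suc k"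
  then obtain j where j: "pad xs j = j + Suc k" by blast
  show "\<not> (\<exists>i. pad (pconj xs) i + k = i)"
  proof
    assume "\<exists>i. pad (pconj xs) i + k = i"
    then obtain i where i: "pad (pconj xs) i + k = i" by blast
    have "(j < pad (pconj xs) i) = (i < pad xs j)" by (rule dual[OF s])
    then show False using i j by linarith
  qed
next
  let ?Q = "pad (pconj xs)"
  assume no: "\<not> (\<exists>i. ?Q i + k = i)"
  have Qle: "?Q i \<le> length xs" for i
    using pad_conj[OF s] by (simp add: length_filter_le)
  define i1 where "i1 = (LEAST i. ?Q i + k < i)"
  have ex1: "?Q (length xs + k + 1) + k < length xs + k + 1" using Qle[of "length xs + k + 1"] by simp
  then have h1: "?Q i1 + k < i1" unfolding i1_def by (rule LeastI)
  have "i1 \<noteq> 0" using h1 by simp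
  then obtain i where ii: "i1 = Suc i" by (cases i1) auto
  have "\<not> (?Q i + k < i)"
  proof
    assume "?Q i + k < i"
    then have "i1 \<le> i" unfolding i1_def by (rule Least_le)
    then show False using ii by simp
  qed
  moreover have "?Q i + k \<noteq> i" using no by blast
  ultimately have gt: "i < ?Q i + k" by linarith
  have lt: "?Q (Suc i) + k \<le> i" using h1 ii by simp
  define j where "j = i - k"
  have "k \<le> i" using lt by simp
  have "j < ?Q i" using gt \<open>k \<le> i\<close> unfolding j_def by linarith
  then have a: "i < pad xs j" using dual[OF s] by simp
  have "\<not> (j < ?Q (Suc i))" using lt unfolding j_def by linarith
  then have b: "\<not> (Suc i < pad xs j)" using dual[OF s] by simp
  have "pad xs j = j + Suc k" using a b \<open>k \<le> i\<close> unfolding j_def by linarith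
  then show "\<exists>j. pad xs j = j + Suc k" by blast
qed

lemma phit_rs: "sd xs \<Longrightarrow> phit (Suc k) xs \<longleftrightarrow> int k \<notin> rank_set (pconj xs)"
  using phit_iff[of xs "Suc k"] key[of xs k] rs_iff[of k "pconj xs"] by simp

definition Bset :: "nat \<Rightarrow> nat \<Rightarrow> nat list set" where
  "Bset k n = {xs \<in> partitions n. phit (Suc k) xs}"

lemma card_B: "card (Bset k n) = card {ys \<in> partitions n. int k \<notin> rank_set ys}"
proof (rule bij_betw_same_card[of pconj])
  show "bij_betw pconj (Bset k n) {ys \<in> partitions n. int k \<notin> rank_set ys}"
  proof (rule bij_betw_byWitness[where f'=pconj])
    show "\<forall>a\<in>Bset k n. pconj (pconj a) = a"
      unfolding Bset_def partitions_def using conj_conj by auto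
    show "\<forall>a\<in>{ys \<in> partitions n. int k \<notin> rank_set ys}. pconj (pconj a) = a"
      unfolding partitions_def using conj_conj by auto
    show "pconj ` Bset k n \<subseteq> {ys \<in> partitions n. int k \<notin> rank_set ys}"
      unfolding Bset_def using conj_parts phit_rs unfolding partitions_def by auto
    show "pconj ` {ys \<in> partitions n. int k \<notin> rank_set ys} \<subseteq> Bset k n"
    proof
      fix z assume "z \<in> pconj ` {ys \<in> partitions n. int k \<notin> rank_set ys}"
      then obtain ys where ys: "ys \<in> partitions n" "int k \<notin> rank_set ys" "z = pconj ys" by blast
      have sy: "sd ys" "\<forall>x\<in>set ys. 0 < x" using ys(1) unfolding partitions_def by auto
      have "phit (Suc k) (pconj ys)"
        using phit_rs[OF sd_conj, of k ys] conj_conj[OF sy] ys(2) by simp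
      then show "z \<in> Bset k n" using conj_parts[OF ys(1)] ys(3) unfolding Bset_def by auto
    qed
  qed
qed



definition FF :: "nat \<Rightarrow> nat list \<Rightarrow> nat list" where
  "FF k xs = pins (Suc k) (take (length xs - (Suc k + pcnt (Suc k) xs)) xs)"

definition GG :: "nat \<Rightarrow> nat list \<Rightarrow> nat list" where
  "GG k xs = pdel (Suc k) xs @ replicate (Suc k + pcnt (Suc k) xs) 1"

definition Aset :: "nat \<Rightarrow> nat \<Rightarrow> nat list set" where
  "Aset k n = {xs \<in> partitions n. length (filter (\<lambda>x. count_list xs 1 < x) xs) + Suc k \<le> count_list xs 1}"

lemma count_rep: "count_list (replicate v x) x = v"
  by (induction v) auto

lemma sd_rep: "sd (replicate v (x::nat))"
  by (induction v) auto

lemma FA: assumes xs: "xs \<in> Aset k n"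
  shows "FF k xs \<in> Bset k n \<and> GG k (FF k xs) = xs"
proof -
  define c where "c = Suc k"
  define w where "w = count_list xs 1"
  define j where "j = pcnt c xs"
  define F0 where "F0 = filter (\<lambda>x. 1 < x) xs"
  have s: "sd xs" and pos: "\<forall>x\<in>set xs. 0 < x" and sm: "sum_list xs = n"
    using xs unfolding Aset_def partitions_def by auto
  have A: "length (filter (\<lambda>x. w < x) xs) + c \<le> w"
    using xs unfolding Aset_def w_def c_def by auto
  have vw: "c + j \<le> w" using pcnt_crank[OF s, of c w] A unfolding j_def by linarith
  have split: "xs = F0 @ replicate w 1" unfolding F0_def w_def by (rule ones_split[OF s pos])
  have jF: "j \<le> length F0" unfolding j_def F0_def c_def by (rule pcnt_le) simp
  have len: "length xs = length F0 + w" using split by (metis length_append length_replicate)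
  define ys where "ys = take (length xs - (c + j)) xs"
  have ys: "ys = F0 @ replicate (w - (c + j)) 1"
  proof -
    have "length xs - (c + j) = length F0 + (w - (c + j))" using len vw by simp
    then show ?thesis unfolding ys_def by (subst split) (simp add: take_append)
  qed
  have cys: "pcnt c ys = j"
    unfolding ys_def pcnt_take j_def using len vw jF unfolding j_def by simp
  have FFe: "FF k xs = pins c ys" unfolding FF_def ys_def c_def j_def by simp
  have sys: "sd ys" unfolding ys_def using s by (rule sorted_wrt_take)
  have pys: "\<forall>x\<in>set ys. 0 < x" unfolding ys_def using pos by (meson in_set_takeD)
  have sum_ys: "sum_list ys + (c + j) = sum_list xs"
  proof -
    have "sum_list xs = sum_list F0 + w" by (subst split) (simp add: sum_list_replicate)
    moreover have "sum_list ys = sum_list F0 + (w - (c + j))" by (simp add: ys sum_list_replicate)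
    ultimately show ?thesis using vw by simp
  qed
  have "FF k xs \<in> partitions n"
    unfolding FFe partitions_def
    using sd_pins[OF sys] pys sum_pins[of c ys] cys sum_ys sm by (auto simp: set_pins c_def)
  moreover have "phit (Suc k) (FF k xs)" unfolding FFe c_def by (rule phit_pins)
  moreover have "GG k (FF k xs) = xs"
  proof -
    have e1: "pcnt c (pins c ys) = j" using pcnt_pins[of c ys] cys by simp
    have e2: "pdel c (pins c ys) = ys" by (rule pdel_pins)
    have "GG k (FF k xs) = pdel c (pins c ys) @ replicate (c + pcnt c (pins c ys)) 1"
      unfolding GG_def FFe c_def by simp
    also have "\<dots> = ys @ replicate (c + j) 1" by (simp only: e1 e2)
    also have "\<dots> = F0 @ (replicate (w - (c + j)) 1 @ replicate (c + j) 1)" by (simp add: ys)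
    also have "replicate (w - (c + j)) (1::nat) @ replicate (c + j) 1 = replicate w 1"
      using vw by (simp add: replicate_add[symmetric])
    finally show ?thesis using split by metis
  qed
  ultimately show ?thesis unfolding Bset_def by auto
qed

lemma GB: assumes xs: "xs \<in> Bset k n"
  shows "GG k xs \<in> Aset k n \<and> FF k (GG k xs) = xs"
proof -
  define c where "c = Suc k"
  define j where "j = pcnt c xs"
  define D where "D = pdel c xs"
  have s: "sd xs" and pos: "\<forall>x\<in>set xs. 0 < x" and sm: "sum_list xs = n" and h: "phit c xs"
    using xs unfolding Bset_def partitions_def c_def by auto
  have GGe: "GG k xs = D @ replicate (c + j) 1" unfolding GG_def D_def j_def c_def by simp
  have sD: "sd D" unfolding D_def by (rule sd_pdel[OF s])
  have pD: "\<forall>x\<in>set D. 0 < x" unfolding D_def using pos set_pdel by blast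
  have sumD: "sum_list D + (c + j) = n" using sum_pdel[OF h] sm unfolding D_def j_def by simp
  have "sd (D @ replicate (c + j) 1)"
    using sD sd_rep[of "c + j" 1] pD by (auto simp: sorted_wrt_append Suc_le_eq)
  moreover have "sum_list (D @ replicate (c + j) 1) = n" using sumD by (simp add: sum_list_replicate)
  moreover have "\<forall>x\<in>set (D @ replicate (c + j) 1). 0 < x" using pD by (simp add: set_replicate_conv_if)
  ultimately have P: "GG k xs \<in> partitions n" unfolding GGe partitions_def mem_Collect_eq by (intro conjI)
  define w where "w = count_list (D @ replicate (c + j) 1) 1"
  have w: "w = count_list D 1 + (c + j)" unfolding w_def by (simp add: count_rep)
  have f1: "filter (\<lambda>x. w < x) (replicate (c + j) (1::nat)) = []" using w c_def by auto
  have f2: "length (filter (\<lambda>x. w < x) D) \<le> j"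
    unfolding D_def j_def by (rule pdel_filter[OF h s]) (use w j_def in simp)
  have "length (filter (\<lambda>x. w < x) (D @ replicate (c + j) 1)) + Suc k \<le> w"
    using f1 f2 w c_def by simp
  then have "GG k xs \<in> Aset k n" using P unfolding Aset_def GGe w_def by simp
  moreover have "FF k (GG k xs) = xs"
  proof -
    have "\<forall>y\<in>set (replicate (c + j) (1::nat)). y \<le> c" unfolding c_def by simp
    then have cz: "pcnt c (D @ replicate (c + j) 1) = j"
      unfolding D_def j_def by (rule pcnt_pdel_app[OF h s])
    have "FF k (GG k xs) = pins c (take (length D) (D @ replicate (c + j) 1))"
      unfolding FF_def GGe c_def[symmetric] using cz by simp
    also have "\<dots> = pins c D" by simp
    also have "\<dots> = xs" unfolding D_def by (rule pins_pdel[OF h s])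
    finally show ?thesis .
  qed
  ultimately show ?thesis by blast
qed

lemma card_AB: "card (Aset k n) = card (Bset k n)"
proof (rule bij_betw_same_card[of "FF k"])
  show "bij_betw (FF k) (Aset k n) (Bset k n)"
  proof (rule bij_betw_byWitness[where f'="GG k"])
    show "\<forall>a\<in>Aset k n. GG k (FF k a) = a" using FA by blast
    show "\<forall>a\<in>Bset k n. FF k (GG k a) = a" using GB by blast
    show "FF k ` Aset k n \<subseteq> Bset k n" using FA by blast
    show "GG k ` Bset k n \<subseteq> Aset k n" using GB by blast
  qed
qed



lemma len_le_sum: "\<forall>x\<in>set xs. 0 < (x::nat) \<Longrightarrow> length xs \<le> sum_list xs"
  by (induction xs) auto

lemma fin_parts: "finite (partitions n)"
proof (rule finite_subset)
  show "partitions n \<subseteq> {xs. set xs \<subseteq> {..n} \<and> length xs \<le> n}"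
  proof
    fix xs assume "xs \<in> partitions n"
    then have s: "sum_list xs = n" and p: "\<forall>x\<in>set xs. 0 < x" unfolding partitions_def by auto
    have "set xs \<subseteq> {..n}" using s by (auto dest: member_le_sum_list)
    moreover have "length xs \<le> n" using len_le_sum[OF p] s by simp
    ultimately show "xs \<in> {xs. set xs \<subseteq> {..n} \<and> length xs \<le> n}" by simp
  qed
  show "finite {xs. set xs \<subseteq> {..n} \<and> length xs \<le> n}" by (rule finite_lists_length_le) simp
qed

lemma fiber:
  fixes f :: "'a \<Rightarrow> int"
  assumes fS: "finite S"
  shows "(\<Sum>r\<in>{r. r \<le> a \<and> int (card {x \<in> S. f x = r}) \<noteq> 0}. int (card {x \<in> S. f x = r}))
       = int (card {x \<in> S. f x \<le> a})"
proof -
  define T where "T = {x \<in> S. f x \<le> a}"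
  have fT: "finite T" unfolding T_def using fS by simp
  have R: "{r. r \<le> a \<and> int (card {x \<in> S. f x = r}) \<noteq> 0} = f ` T"
  proof (rule set_eqI)
    fix r
    have fin: "finite {x \<in> S. f x = r}" using fS by simp
    have "int (card {x \<in> S. f x = r}) \<noteq> 0 \<longleftrightarrow> {x \<in> S. f x = r} \<noteq> {}"
      using fin by simp
    then show "r \<in> {r. r \<le> a \<and> int (card {x \<in> S. f x = r}) \<noteq> 0} \<longleftrightarrow> r \<in> f ` T"
      unfolding T_def by blast
  qed
  have "(\<Sum>r\<in>f ` T. int (card {x \<in> S. f x = r})) = (\<Sum>r\<in>f ` T. (\<Sum>x\<in>{x. x \<in> T \<and> f x = r}. (1::int)))"
  proof (rule sum.cong)
    fix r assume "r \<in> f ` T"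
    then have "r \<le> a" unfolding T_def by auto
    then have "{x \<in> S. f x = r} = {x. x \<in> T \<and> f x = r}" unfolding T_def by auto
    then show "int (card {x \<in> S. f x = r}) = (\<Sum>x\<in>{x. x \<in> T \<and> f x = r}. (1::int))" by simp
  qed simp
  also have "\<dots> = (\<Sum>x\<in>T. (1::int))"
    by (rule sum.group[OF fT finite_imageI[OF fT] subset_refl])
  also have "\<dots> = int (card T)" by simp
  finally show ?thesis unfolding R T_def .
qed

lemma card_split: "finite S \<Longrightarrow> card {x \<in> S. Q x} + card {x \<in> S. \<not> Q x} = card S"
proof -
  assume f: "finite S"
  have "S = {x \<in> S. Q x} \<union> {x \<in> S. \<not> Q x}" by auto
  moreover have "card ({x \<in> S. Q x} \<union> {x \<in> S. \<not> Q x}) = card {x \<in> S. Q x} + card {x \<in> S. \<not> Q x}"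
    by (rule card_Un_disjoint) (use f in auto)
  ultimately show ?thesis by simp
qed

lemma parts1: "partitions 1 = {[1]}"
proof (rule set_eqI)
  fix xs :: "nat list"
  show "xs \<in> partitions 1 \<longleftrightarrow> xs \<in> {[1]}"
  proof
    assume "xs \<in> partitions 1"
    then have s: "sum_list xs = 1" and p: "\<forall>x\<in>set xs. 0 < x" unfolding partitions_def by auto
    show "xs \<in> {[1]}"
    proof (cases xs)
      case Nil then show ?thesis using s by simp
    next
      case (Cons y ys)
      then have "y + sum_list ys = 1" "0 < y" "\<forall>x\<in>set ys. 0 < x" using s p by auto
      then have "y = 1" "sum_list ys = 0" by linarith+
      then have "ys = []" using \<open>\<forall>x\<in>set ys. 0 < x\<close> by (cases ys) auto
      then show ?thesis using Cons \<open>y = 1\<close> by simp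
    qed
  next
    assume "xs \<in> {[1]}" then show "xs \<in> partitions 1" unfolding partitions_def by simp
  qed
qed

lemma sub1: "{xs \<in> {[1::nat]}. Q xs} = (if Q [1] then {[1]} else {})"
  by auto

lemma AE: assumes n: "1 \<le> n"
  shows "{xs \<in> partitions n. pcrank xs \<le> - int k - 1} = Aset k n"
proof -
  have "pcrank xs \<le> - int k - 1 \<longleftrightarrow>
        length (filter (\<lambda>x. count_list xs 1 < x) xs) + Suc k \<le> count_list xs 1"
    if xs: "xs \<in> partitions n" for xs
  proof (cases "1 \<in> set xs")
    case True
    then have "pcrank xs = int (length (filter (\<lambda>x. count_list xs 1 < x) xs)) - int (count_list xs 1)"
      unfolding pcrank_def by simp
    then show ?thesis by linarith
  next
    case False
    then have "count_list xs 1 = 0" by (simp add: count_list_0_iff)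
    moreover have "pcrank xs = int (Max (set xs))" using False unfolding pcrank_def by simp
    ultimately show ?thesis by simp
  qed
  then show ?thesis unfolding Aset_def by auto
qed

theorem theorem2p1:
  fixes m :: int and n :: nat
  assumes "m < 0" and "1 \<le> n"
  shows "N_le (m + 1) n - M_le m n = q (- m - 1) n - p (m + 2) n"
proof -
  define k where "k = nat (- m - 1)"
  have mk: "- m - 1 = int k" "m = - int k - 1" using assms(1) unfolding k_def by auto
  define P where "P = partitions n"
  have fP: "finite P" unfolding P_def by (rule fin_parts)
  have NL: "N_le (m + 1) n = int (card {xs \<in> P. prank xs \<le> m + 1})"
    unfolding N_le_def N_def P_def by (rule fiber[OF fin_parts])
  have pp: "p (m + 2) n = int (card {xs \<in> P. \<not> prank xs \<le> m + 1})"
  proof -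
    have "{xs \<in> P. \<not> prank xs \<le> m + 1} = {xs \<in> partitions n. m + 2 \<le> prank xs}"
      unfolding P_def by auto
    then show ?thesis unfolding p_def by simp
  qed
  have c1: "card {xs \<in> P. prank xs \<le> m + 1} + card {xs \<in> P. \<not> prank xs \<le> m + 1} = card P"
    by (rule card_split[OF fP])
  have qq: "q (- m - 1) n = int (card {xs \<in> P. int k \<in> rank_set xs})"
    unfolding q_def P_def mk(1) ..
  have c2: "card {xs \<in> P. int k \<in> rank_set xs} + card {xs \<in> P. int k \<notin> rank_set xs} = card P"
    by (rule card_split[OF fP])
  show ?thesis
  proof (cases "n = 1")
    case False
    have Ml: "M_le m n = int (card {xs \<in> P. pcrank xs \<le> m})"
      unfolding M_le_def M_def P_def using False fiber[OF fin_parts[of n], where f=pcrank and a=m] by simp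
    have "card {xs \<in> P. pcrank xs \<le> m} = card (Aset k n)"
      unfolding P_def mk(2) using AE[OF assms(2)] by simp
    also have "\<dots> = card (Bset k n)" by (rule card_AB)
    also have "\<dots> = card {xs \<in> P. int k \<notin> rank_set xs}" unfolding P_def by (rule card_B)
    finally have "card {xs \<in> P. pcrank xs \<le> m} = card {xs \<in> P. int k \<notin> rank_set xs}" .
    then show ?thesis using NL pp qq Ml c1 c2 by linarith
  next
    case True
    have P1: "P = {[1]}" unfolding P_def True by (rule parts1)
    have pr: "prank [1] = 0" by (simp add: prank_def)
    have rs1: "int k \<in> rank_set [1] \<longleftrightarrow> k \<noteq> 0" by (simp add: rs_mem Suc_le_eq)
    have Ml: "M_le m n = (if m = -1 then 1 else 0)"
    proof -
      have "{r. r \<le> m \<and> M r n \<noteq> 0} = (if m = -1 then {-1} else {})"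
        using assms(1) True unfolding M_def by auto
      then show ?thesis unfolding M_le_def using True by (auto simp: M_def)
    qed
    show ?thesis
      using NL pp qq Ml unfolding P1 sub1 pr rs1 using mk by auto
  qed
qed

end
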